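(* Let $r,s\ge2$ be fixed integers, and consider the equation in $x\in(-1,\infty)$ \[ (rs-r-s)\Big(1+\frac{x}{r-1}\Big)^{s-2}=(1+x)\Big(rs-r-s+sx+\frac{x(x+1)}{r-1}\Big).\tag{$\ast$} \] Then $x=0$ is a solution of $(\ast)$. Moreover: (a) If $s\in\{2,3,4\}$ and $(r,s)\ne(2,2)$, then $x=0$ is the unique solution of $(\ast)$ on $(-1,\infty)$. (b) If $s\ge5$ and $r\ge s-1$, then $(\ast)$ has no solutions on $(-1,0)$ and at most one solution on $(0,\infty)$. *)

theory Defs
  imports Complex_Main
begin

definition eqA2 :: "nat \<Rightarrow> nat \<Rightarrow> real \<Rightarrow> bool" where
  "eqA2 r s x \<longleftrightarrow>
     (real r * real s - real r - real s) * (1 + x / (real r - 1)) ^ (s - 2)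
     = (1 + x) * (real r * real s - real r - real s + real s * x + x * (x + 1) / (real r - 1))"

end

theory Submission
  imports Defs
begin

lemma s2: fixes a x :: real assumes a: "a \<ge> 2" and x: "x > -1"
  and eq: "(a - 1) = (1 + x) * ((a-1) + 2 * x + x * (x + 1) / a)"
  shows "x = 0"
proof -
  have e: "a * ((1 + x) * ((a-1) + 2 * x + x * (x + 1) / a)) = (1+x) * (a*(a-1) + 2*a*x + x*(x+1))"
    using a by (simp add: field_simps)
  have i: "(1+x) * (a*(a-1) + 2*a*x + x*(x+1)) - a*(a-1) = x * ((a*(a-1)) + (1+x)*(2*a + (x+1)))"
    by (simp add: algebra_simps)
  have "x * ((a*(a-1)) + (1+x)*(2*a + (x+1))) = 0" using e i eq by simp
  moreover have "(a*(a-1)) + (1+x)*(2*a + (x+1)) > 0"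
  proof - have "a*(a-1) > 0" using a by simp moreover have "(1+x)*(2*a + (x+1)) > 0" using a x by (intro mult_pos_pos) auto
    ultimately show ?thesis by linarith qed
  ultimately show ?thesis by simp
qed
lemma s3: fixes a x :: real assumes a: "a \<ge> 1" and x: "x > -1"
  and eq: "(2*a - 1) * (1 + x/a) = (1 + x) * ((2*a-1) + 3 * x + x * (x + 1) / a)"
  shows "x = 0"
proof -
  have e1: "a*((2*a - 1) * (1 + x/a)) = (2*a - 1) * (a + x)" using a by (simp add: field_simps)
  have e2: "a*((1 + x) * ((2*a-1) + 3 * x + x * (x + 1) / a)) = (1+x) * (a*(2*a-1) + 3*a*x + x*(x+1))"
    using a by (simp add: field_simps)
  have i: "(1+x) * (a*(2*a-1) + 3*a*x + x*(x+1)) - (2*a - 1) * (a + x) = x * ((2*a-1)*(a-1) + (1+x)*(3*a + (x+1)))"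
    by (simp add: algebra_simps)
  have "x * ((2*a-1)*(a-1) + (1+x)*(3*a + (x+1))) = 0" using e1 e2 i eq by simp
  moreover have "(2*a-1)*(a-1) + (1+x)*(3*a + (x+1)) > 0"
  proof - have "(2*a-1)*(a-1) \<ge> 0" using a by simp moreover have "(1+x)*(3*a + (x+1)) > 0" using a x by (intro mult_pos_pos) auto
    ultimately show ?thesis by linarith qed
  ultimately show ?thesis by simp
qed
lemma s4: fixes a x :: real assumes a: "a \<ge> 1" and x: "x > -1"
  and eq: "(3*a - 1) * (1 + x/a)^2 = (1 + x) * ((3*a-1) + 4 * x + x * (x + 1) / a)"
  shows "x = 0"
proof -
  have e1: "a*a*((3*a - 1) * (1 + x/a)^2) = (3*a - 1) * (a + x)^2" using a by (simp add: field_simps power2_eq_square)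
  have e2: "a*a*((1 + x) * ((3*a-1) + 4 * x + x * (x + 1) / a)) = (1+x) * (a*a*(3*a-1) + 4*a*a*x + a*x*(x+1))"
    using a by (simp add: field_simps)
  have i: "(1+x) * (a*a*(3*a-1) + 4*a*a*x + a*x*(x+1)) - (3*a - 1) * (a + x)^2 = x * ((3*a-1)*(a-1)^2 + (1+x)*(4*a*a-3*a+1) + a*(1+x)^2)"
    by (simp add: algebra_simps power2_eq_square)
  have "x * ((3*a-1)*(a-1)^2 + (1+x)*(4*a*a-3*a+1) + a*(1+x)^2) = 0" using e1 e2 i eq by simp
  moreover have "(3*a-1)*(a-1)^2 + (1+x)*(4*a*a-3*a+1) + a*(1+x)^2 > 0"
  proof - have "(3*a-1)*(a-1)^2 \<ge> 0" using a by simp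
    moreover have "4*a*a-3*a+1 > 0" proof - have "a*(4*a-3) \<ge> 0" using a by simp thus ?thesis by (simp add: algebra_simps) qed
    moreover have "a*(1+x)^2 \<ge> 0" using a by simp
    ultimately have "(1+x)*(4*a*a-3*a+1) > 0" using x by (intro mult_pos_pos) auto
    then show ?thesis using \<open>(3*a-1)*(a-1)^2 \<ge> 0\<close> \<open>a*(1+x)^2 \<ge> 0\<close> by linarith qed
  ultimately show ?thesis by simp
qed


definition Rf :: "real \<Rightarrow> real \<Rightarrow> real \<Rightarrow> real" where
  "Rf a n x = (n-a+(n-1)*x)*(x^2 + (a*(n+2)+1)*x + a*(a*(n+1)-1)) - (a+x)*(1+x)*(a*(n+2)+2*x+1)"

lemma Rf_conv:
  fixes a n u y v :: real
  assumes n: "n \<ge> 3" and a: "a \<ge> n" and u: "u \<ge> -1" and uy: "u < y" and yv: "y < v"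
  shows "(v-u)*Rf a n y < (v-y)*Rf a n u + (y-u)*Rf a n v"
proof -
  have id: "(v-u)*Rf a n y - (v-y)*Rf a n u - (y-u)*Rf a n v
      = -((v-u)*(y-u)*(v-y)*((n-3)*(u+y+v) + (2*n-3*a-4+a*(n*n-4))))"
    unfolding Rf_def by (simp add: algebra_simps power2_eq_square)
  have s: "u+y+v > -3" using u uy yv by linarith
  have f1: "(n-3)*(u+y+v) \<ge> (n-3)*(-3)" using s n by (intro mult_left_mono) auto
  have n9: "n*n \<ge> 9" using n mult_mono[of 3 n 3 n] by auto
  moreover have "a*(n*n-7) \<ge> n*(n*n-7)" using a n n9 by (intro mult_right_mono) auto
  moreover have "n*(n*n-7) - n + 5 > 0"
  proof -
    have "n*n \<ge> 9" using n mult_mono[of 3 n 3 n] by auto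
    hence "n*(n*n-7) \<ge> n*2" using n by (intro mult_left_mono) auto
    thus ?thesis using n by linarith
  qed
  ultimately have pos: "(n-3)*(u+y+v) + (2*n-3*a-4+a*(n*n-4)) > 0" using f1
    by (simp add: algebra_simps)
  have "(v-u)*(y-u)*(v-y) > 0" using uy yv by simp
  hence "(v-u)*(y-u)*(v-y)*((n-3)*(u+y+v) + (2*n-3*a-4+a*(n*n-4))) > 0" using pos by simp
  thus ?thesis using id by linarith
qed

lemma Rf0: assumes n: "n \<ge> 3" and a: "a \<ge> n" shows "Rf a n 0 < 0"
proof -
  have "(n-a)*(a*(a*(n+1)-1)) \<le> 0"
  proof (rule mult_nonpos_nonneg)
    have "a*(n+1) \<ge> 1" using n a mult_mono[of 1 a 1 "n+1"] by auto
    thus "0 \<le> a*(a*(n+1)-1)" using n a by simp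
  qed (use a in simp)
  moreover have "a*(a*(n+2)+1) > 0" using n a by (simp add: add_pos_pos)
  ultimately show ?thesis unfolding Rf_def by (simp add: algebra_simps)
qed

lemma Rfm1: assumes n: "n \<ge> 3" and a: "a \<ge> n" shows "Rf a n (-1) < 0"
proof -
  have "a*(n+1) \<ge> n*(n+1)" using n a by (intro mult_right_mono) auto
  moreover have "n*(n+1) \<ge> 3*4" using n by (intro mult_mono) auto
  moreover have "n*n \<ge> 9" using n mult_mono[of 3 n 3 n] by auto
  ultimately have "a*(n+1)-1-n-2 > 0" by (simp add: algebra_simps)
  hence "a*(a*(n+1)-1-n-2) > 0" using n a by simp
  hence "(1-a)*(a*(a*(n+1)-1-n-2)) < 0" using n a by (intro mult_neg_pos) auto
  thus ?thesis unfolding Rf_def by (simp add: algebra_simps power2_eq_square)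
qed

definition Qf :: "real \<Rightarrow> real \<Rightarrow> real \<Rightarrow> real" where
  "Qf a n x = (a*(n+1)-1) + (n+2)*x + x*(x+1)/a"
lemma key: assumes "a \<noteq> 0" shows
 "a^2 * (n*(1+x)*Qf a n x/a - (1+x/a)*(Qf a n x + (1+x)*((n+2)+(2*x+1)/a))) = Rf a n x"
proof -
  have q: "Qf a n x = (x^2 + (a*(n+2)+1)*x + a*(a*(n+1)-1))/a" unfolding Qf_def using assms
    by (simp add: field_simps power2_eq_square)
  have p: "(n+2)+(2*x+1)/a = (a*(n+2)+2*x+1)/a" using assms by (simp add: field_simps)
  have u: "1+x/a = (a+x)/a" using assms by (simp add: field_simps)
  show ?thesis unfolding q p u Rf_def using assms
    by (simp add: field_simps power2_eq_square)
qed


definition Gf :: "real \<Rightarrow> real \<Rightarrow> nat \<Rightarrow> real \<Rightarrow> real" where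
  "Gf a n m x = (a*(n+1)-1)*(1+x/a)^m / ((1+x)*Qf a n x)"

lemma Qf_pos: assumes n: "n \<ge> 3" and a: "a \<ge> n" and x: "x > -1" shows "Qf a n x > 0"
proof -
  have "x*(x+1) + (1+x) = (x+1)*(x+1)" by (simp add: algebra_simps)
  moreover have "(x+1)*(x+1) \<ge> 0" by simp
  ultimately have "x*(x+1) \<ge> -(1+x)" by linarith
  hence "x*(x+1)/a \<ge> -(1+x)/a" using a n by (intro divide_right_mono) auto
  moreover have "-(1+x)/a \<ge> -(1+x)"
  proof - have "1+x \<le> a*(1+x)" using mult_right_mono[of 1 a "1+x"] a n x by simp
    thus ?thesis using a n x by (simp add: field_simps) qed
  moreover have "(n+1)*x \<ge> -(n+1)" using n x mult_left_mono[of "-1" x "n+1"] by auto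
  moreover have "(n+2)*x = (n+1)*x + x" by (simp add: algebra_simps)
  moreover have "a*(n+1) \<ge> n*(n+1)" using n a by (intro mult_right_mono) auto
  moreover have "n*(n+1) = n*n + n" by (simp add: algebra_simps)
  moreover have "n*n \<ge> 9" using n mult_mono[of 3 n 3 n] by auto
  ultimately have "x*(x+1)/a \<ge> -(1+x)" by linarith
  thus ?thesis unfolding Qf_def using \<open>(n+1)*x \<ge> -(n+1)\<close> \<open>(n+2)*x = (n+1)*x + x\<close>
    \<open>a*(n+1) \<ge> n*(n+1)\<close> \<open>n*(n+1) = n*n + n\<close> \<open>n*n \<ge> 9\<close> by linarith
qed

lemma alg1: fixes N n T a x Q Q' :: real assumes "a \<noteq> 0" shows
  "N*(n*T*(1/a))*((1+x)*Q) - N*((1+x/a)*T)*(Q + (1+x)*Q') = N*T*(n*(1+x)*Q/a - (1+x/a)*(Q+(1+x)*Q'))"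
  using assms by (simp add: field_simps)

lemma alg2: fixes N T R A P :: real shows "(N*T*(R/A))/(P*P) = N*T*R/(A*P^2)"
  by (simp add: power2_eq_square)

lemma Gf_deriv:
  assumes n: "n \<ge> 3" and a: "a \<ge> n" and m: "real m = n" and x: "x > -1"
  shows "(Gf a n m has_real_derivative
     ((a*(n+1)-1)*(1+x/a)^(m-1)*Rf a n x / (a^2*((1+x)*Qf a n x)^2))) (at x)"
proof -
  have a0: "a > 0" using n a by simp
  have m1: "m \<ge> 1" using m n by simp
  define N where "N = a*(n+1)-1"
  define T where "T = (1+x/a)^(m-1)"
  have Tm: "(1+x/a)^m = (1+x/a)*T" unfolding T_def using m1
    by (metis One_nat_def Suc_diff_le diff_Suc_1 power_Suc)
  have d0: "((\<lambda>x. 1+x/a) has_real_derivative 1/a) (at x)"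
    using a0 by (auto intro!: derivative_eq_intros)
  have d1: "((\<lambda>x. N*(1+x/a)^m) has_real_derivative N*(real m*(1+x/a)^(m-1)*(1/a))) (at x)"
    using DERIV_cmult[OF DERIV_power[OF d0, of m], of N] by (simp add: mult_ac)
  have d2: "((\<lambda>x. (1+x)*Qf a n x) has_real_derivative (Qf a n x + (1+x)*((n+2) + (2*x+1)/a))) (at x)"
    unfolding Qf_def using a0 by (auto intro!: derivative_eq_intros simp: field_simps)
  have nz: "(1+x)*Qf a n x \<noteq> 0" using Qf_pos[OF n a x] x by simp
  have D: "((\<lambda>x. N*(1+x/a)^m / ((1+x)*Qf a n x)) has_real_derivative
     ((N*(real m*(1+x/a)^(m-1)*(1/a))) * ((1+x)*Qf a n x) - N*(1+x/a)^m * (Qf a n x + (1+x)*((n+2) + (2*x+1)/a)))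
       / (((1+x)*Qf a n x) * ((1+x)*Qf a n x))) (at x)"
    by (rule DERIV_divide[OF d1 d2 nz])
  have E: "((N*(real m*(1+x/a)^(m-1)*(1/a))) * ((1+x)*Qf a n x) - N*(1+x/a)^m * (Qf a n x + (1+x)*((n+2) + (2*x+1)/a)))
       / (((1+x)*Qf a n x) * ((1+x)*Qf a n x))
     = N*T*Rf a n x / (a^2*((1+x)*Qf a n x)^2)"
  proof -
    have "(N*(real m*(1+x/a)^(m-1)*(1/a))) * ((1+x)*Qf a n x) - N*(1+x/a)^m * (Qf a n x + (1+x)*((n+2) + (2*x+1)/a))
       = N*T*(n*(1+x)*Qf a n x/a - (1+x/a)*(Qf a n x + (1+x)*((n+2)+(2*x+1)/a)))" (is "_ = N*T*?B")
      unfolding Tm m T_def[symmetric] using a0 by (intro alg1) simp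
    also have "\<dots> = N*T*(Rf a n x / a^2)"
    proof -
      have "?B = (a^2 * ?B)/a^2" by (rule nonzero_mult_div_cancel_left[symmetric]) (use a0 in simp)
      also have "\<dots> = Rf a n x / a^2" unfolding key[of a n x, OF order.strict_implies_not_eq[OF a0, symmetric]] ..
      finally show ?thesis by simp
    qed
    finally have num: "(N*(real m*(1+x/a)^(m-1)*(1/a))) * ((1+x)*Qf a n x) - N*(1+x/a)^m * (Qf a n x + (1+x)*((n+2) + (2*x+1)/a))
       = N*T*(Rf a n x / a^2)" .
    show ?thesis unfolding num by (rule alg2)
  qed
  have G: "Gf a n m = (\<lambda>x. N*(1+x/a)^m / ((1+x)*Qf a n x))" by (rule ext) (simp add: Gf_def N_def)
  show ?thesis unfolding G N_def[symmetric] T_def[symmetric] using D unfolding E .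
qed


lemma partB:
  fixes a n :: real and m :: nat
  assumes n: "n \<ge> 3" and a: "a \<ge> n" and m: "real m = n"
  shows "(\<forall>x. -1 < x \<and> x < 0 \<longrightarrow> Gf a n m x \<noteq> 1) \<and>
         (\<forall>x y. 0 < x \<and> 0 < y \<and> Gf a n m x = 1 \<and> Gf a n m y = 1 \<longrightarrow> x = y)"
proof -
  have a0: "a > 0" using n a by simp
  define N where "N = a*(n+1)-1"
  have N0: "N > 0"
  proof -
    have "a*(n+1) \<ge> 1*1" using a n by (intro mult_mono) auto
    moreover have "a*(n+1) \<noteq> 1"
    proof
      assume "a*(n+1) = 1"
      moreover have "a*(n+1) \<ge> 3*4" using a n by (intro mult_mono) auto
      ultimately show False by simp
    qed
    ultimately show ?thesis unfolding N_def by simp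
  qed
  define K where "K x = N*(1+x/a)^(m-1) / (a^2*((1+x)*Qf a n x)^2)" for x
  have Kpos: "K x > 0" if "x > -1" for x
  proof -
    have "1 + x/a > 0"
    proof -
      have "x/a > -1/a" using divide_strict_right_mono[OF that a0] by simp
      moreover have "1/a \<le> 1" using a n by simp
      ultimately show ?thesis by linarith
    qed
    moreover have "(1+x)*Qf a n x \<noteq> 0" using Qf_pos[OF n a that] that by simp
    ultimately show ?thesis unfolding K_def using N0 a0 by simp
  qed
  have der: "(Gf a n m has_real_derivative K x * Rf a n x) (at x)" if "x > -1" for x
    using Gf_deriv[OF n a m that] unfolding K_def N_def by (simp add: mult_ac)
  have G0: "Gf a n m 0 = 1"
    unfolding Gf_def Qf_def using N0 unfolding N_def by simp
  have Rneg: "Rf a n y < 0" if "-1 < y" "y \<le> 0" for y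
  proof (cases "y = 0")
    case True thus ?thesis using Rf0[OF n a] by simp
  next
    case False
    hence y0: "y < 0" using that by simp
    have "(0-(-1))*Rf a n y < (0-y)*Rf a n (-1) + (y-(-1))*Rf a n 0"
      by (rule Rf_conv[OF n a]) (use that y0 in auto)
    moreover have "(0-y)*Rf a n (-1) < 0" using y0 Rfm1[OF n a] by (intro mult_pos_neg) auto
    moreover have "(y-(-1))*Rf a n 0 < 0" using that Rf0[OF n a] by (intro mult_pos_neg) auto
    ultimately show ?thesis by simp
  qed
  have P1: "Gf a n m x \<noteq> 1" if "-1 < x" "x < 0" for x
  proof -
    have "Gf a n m x > Gf a n m 0"
    proof (rule DERIV_neg_imp_decreasing[OF \<open>x < 0\<close>])
      fix z assume z: "x \<le> z" "z \<le> 0"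
      hence "z > -1" using that by simp
      show "\<exists>y. DERIV (Gf a n m) z :> y \<and> y < 0"
        using der[OF \<open>z > -1\<close>] Kpos[OF \<open>z > -1\<close>] Rneg[OF \<open>z > -1\<close> \<open>z \<le> 0\<close>]
        by (intro exI[of _ "K z * Rf a n z"]) (simp add: mult_pos_neg)
    qed
    thus ?thesis using G0 by simp
  qed
  have P2: "x = y" if xy: "0 < x" "0 < y" "Gf a n m x = 1" "Gf a n m y = 1" "x \<le> y" for x y
  proof (rule ccontr)
    assume "x \<noteq> y"
    hence xy': "x < y" using xy by simp
    obtain \<xi> where \<xi>: "0 < \<xi>" "\<xi> < x" "DERIV (Gf a n m) \<xi> :> 0"
    proof -
      have "\<exists>z. 0 < z \<and> z < x \<and> DERIV (Gf a n m) z :> 0"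
      proof (rule Rolle)
        show "0 < x" by fact
        show "Gf a n m 0 = Gf a n m x" using G0 xy by simp
        show "continuous_on {0..x} (Gf a n m)"
          by (rule DERIV_atLeastAtMost_imp_continuous_on) (use der in force)
        show "Gf a n m differentiable (at z)" if "0 < z" "z < x" for z
          using der[of z] that unfolding real_differentiable_def by auto
      qed
      thus ?thesis using that by blast
    qed
    have "K \<xi> * Rf a n \<xi> = 0" using DERIV_unique[OF der \<xi>(3)] \<xi> by simp
    hence R\<xi>: "Rf a n \<xi> = 0" using Kpos[of \<xi>] \<xi> by simp
    have Rpos: "Rf a n z > 0" if "z > \<xi>" for z
    proof -
      have "(z-0)*Rf a n \<xi> < (z-\<xi>)*Rf a n 0 + (\<xi>-0)*Rf a n z"
        by (rule Rf_conv[OF n a]) (use that \<xi> in auto)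
      moreover have "(z-\<xi>)*Rf a n 0 < 0" using that Rf0[OF n a] by (intro mult_pos_neg) auto
      ultimately have "\<xi> * Rf a n z > 0" using R\<xi> by simp
      thus ?thesis using \<xi> by (simp add: zero_less_mult_iff)
    qed
    have "Gf a n m x < Gf a n m y"
    proof (rule DERIV_pos_imp_increasing[OF xy'])
      fix z assume z: "x \<le> z" "z \<le> y"
      hence zz: "z > -1" "z > \<xi>" using xy \<xi> by auto
      show "\<exists>w. DERIV (Gf a n m) z :> w \<and> w > 0"
        using der[OF zz(1)] Kpos[OF zz(1)] Rpos[OF zz(2)]
        by (intro exI[of _ "K z * Rf a n z"]) simp
    qed
    thus False using xy by simp
  qed
  show ?thesis
  proof (intro conjI allI impI)
    fix x :: real assume "-1 < x \<and> x < 0" thus "Gf a n m x \<noteq> 1" using P1 by blast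
  next
    fix x y :: real assume h: "0 < x \<and> 0 < y \<and> Gf a n m x = 1 \<and> Gf a n m y = 1"
    show "x = y"
    proof (cases "x \<le> y")
      case True thus ?thesis using P2 h by blast
    next
      case False thus ?thesis using P2[of y x] h by auto
    qed
  qed
qed


theorem lemmaA2:
  fixes r s :: nat
  assumes "r \<ge> 2" and "s \<ge> 2"
  shows "eqA2 r s 0 \<and>
         (s \<in> {2, 3, 4} \<and> (r, s) \<noteq> (2, 2) \<longrightarrow>
           (\<forall>x::real. x > -1 \<and> eqA2 r s x \<longrightarrow> x = 0)) \<and>
         (s \<ge> 5 \<and> r \<ge> s - 1 \<longrightarrow>
           (\<forall>x::real. -1 < x \<and> x < 0 \<longrightarrow> \<not> eqA2 r s x) \<and>
           (\<forall>x y::real. 0 < x \<and> 0 < y \<and> eqA2 r s x \<and> eqA2 r s y \<longrightarrow> x = y))"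
proof -
  have r1: "real r - 1 \<ge> 1" using assms by simp
  have E0: "eqA2 r s 0" unfolding eqA2_def by simp
  have PA: "x = 0" if s: "s \<in> {2, 3, 4}" "(r, s) \<noteq> (2, 2)" and x: "x > -1" "eqA2 r s x" for x
  proof -
    consider "s = 2" | "s = 3" | "s = 4" using s by auto
    thus ?thesis
    proof cases
      case 1
      hence "r \<ge> 3" using s assms by auto
      hence a: "real r - 1 \<ge> 2" by simp
      have "(real r - 1 - 1) = (1+x)*((real r - 1 - 1) + 2*x + x*(x+1)/(real r - 1))"
        using x(2) 1 unfolding eqA2_def by (simp add: algebra_simps)
      thus ?thesis using s2[OF a x(1)] by simp
    next
      case 2
      have "(2*(real r - 1) - 1) * (1 + x/(real r - 1)) = (1+x)*((2*(real r - 1) - 1) + 3*x + x*(x+1)/(real r - 1))"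
        using x(2) 2 unfolding eqA2_def by (simp add: algebra_simps)
      thus ?thesis using s3[OF r1 x(1)] by simp
    next
      case 3
      have "(3*(real r - 1) - 1) * (1 + x/(real r - 1))^2 = (1+x)*((3*(real r - 1) - 1) + 4*x + x*(x+1)/(real r - 1))"
        using x(2) 3 unfolding eqA2_def by (simp add: algebra_simps)
      thus ?thesis using s4[OF r1 x(1)] by simp
    qed
  qed
  have PB: "(\<forall>x::real. -1 < x \<and> x < 0 \<longrightarrow> \<not> eqA2 r s x) \<and>
           (\<forall>x y::real. 0 < x \<and> 0 < y \<and> eqA2 r s x \<and> eqA2 r s y \<longrightarrow> x = y)"
    if s: "s \<ge> 5" "r \<ge> s - 1"
  proof -
    define a where "a = real r - 1"
    define n where "n = real s - 2"
    have n: "n \<ge> 3" using s unfolding n_def by simp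
    have a: "a \<ge> n" using s unfolding n_def a_def by simp
    have m: "real (s-2) = n" using s unfolding n_def by simp
    have iff: "eqA2 r s x \<longleftrightarrow> Gf a n (s-2) x = 1" if x: "x > -1" for x
    proof -
      have nz: "(1+x)*Qf a n x \<noteq> 0" using Qf_pos[OF n a x] x by simp
      have "eqA2 r s x \<longleftrightarrow> (a*(n+1)-1)*(1+x/a)^(s-2) = (1+x)*Qf a n x"
        unfolding eqA2_def Qf_def a_def n_def using s by (simp add: algebra_simps)
      also have "\<dots> \<longleftrightarrow> Gf a n (s-2) x = 1" unfolding Gf_def using nz by (simp only: divide_eq_1_iff) simp
      finally show ?thesis .
    qed
    have B: "(\<forall>x. -1 < x \<and> x < 0 \<longrightarrow> Gf a n (s-2) x \<noteq> 1) \<and>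
         (\<forall>x y. 0 < x \<and> 0 < y \<and> Gf a n (s-2) x = 1 \<and> Gf a n (s-2) y = 1 \<longrightarrow> x = y)"
      by (rule partB[OF n a m])
    show ?thesis
    proof (intro conjI allI impI)
      fix x :: real assume h: "-1 < x \<and> x < 0"
      hence x1: "x > -1" and x2: "x < 0" by auto
      have "Gf a n (s-2) x \<noteq> 1" using B x1 x2 by blast
      thus "\<not> eqA2 r s x" using iff[OF x1] by simp
    next
      fix x y :: real assume h: "0 < x \<and> 0 < y \<and> eqA2 r s x \<and> eqA2 r s y"
      hence x1: "x > -1" and y1: "y > -1" by auto
      have "Gf a n (s-2) x = 1" using h iff[OF x1] by simp
      moreover have "Gf a n (s-2) y = 1" using h iff[OF y1] by simp
      ultimately show "x = y" using B h by blast
    qed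
  qed
  show ?thesis
  proof (intro conjI impI)
    show "eqA2 r s 0" by (rule E0)
  next
    assume h: "s \<in> {2, 3, 4} \<and> (r, s) \<noteq> (2, 2)"
    show "\<forall>x::real. x > -1 \<and> eqA2 r s x \<longrightarrow> x = 0"
    proof (intro allI impI)
      fix x :: real assume "x > -1 \<and> eqA2 r s x"
      thus "x = 0" using PA[of x] h by blast
    qed
  next
    assume h: "s \<ge> 5 \<and> r \<ge> s - 1"
    show "\<forall>x::real. -1 < x \<and> x < 0 \<longrightarrow> \<not> eqA2 r s x" using PB h by blast
  next
    assume h: "s \<ge> 5 \<and> r \<ge> s - 1"
    show "\<forall>x y::real. 0 < x \<and> 0 < y \<and> eqA2 r s x \<and> eqA2 r s y \<longrightarrow> x = y" using PB h by blast
  qed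
qed

end
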